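(* Let $X,Y$ be u.l.f.\ metric spaces and let $\alpha\colon X\to\mathrm{Fin}(Y)$ and $\beta\colon Y\to\mathrm{Fin}(X)$ be functions such that (Bij1) whenever $f\colon X\to Y$ and $g\colon Y\to X$ satisfy $f(x)\in\alpha(x)$ for all $x\in X$ and $g(y)\in\beta(y)$ for all $y\in Y$, then $f$ and $g$ are mutually inverse coarse equivalences (in particular all $\alpha(x)$, $\beta(y)$ are nonempty); and (Bij2) for every finite $A\subseteq X$ and finite $B\subseteq Y$, $|A|\le|\bigcup_{x\in A}\alpha(x)|$ and $|B|\le|\bigcup_{y\in B}\beta(y)|$. Then every function $f\colon X\to Y$ with $f(x)\in\alpha(x)$ for all $x\in X$ is close to a bijective coarse equivalence $X\to Y$.
   Context: $\mathrm{Fin}(Y)$ is the set of finite subsets of $Y$. A map $f\colon X\to Y$ is coarse if for every $r>0$ there is $s>0$ with $d_X(x,x')\le r\Rightarrow d_Y(f(x),f(x'))\le s$; $f,f'$ are close if $\sup_x d_Y(f(x),f'(x))<\infty$; coarse maps $f\colon X\to Y$, $g\colon Y\to X$ are mutually inverse coarse equivalences if $f\circ g$ is close to $\mathrm{Id}_Y$ and $g\circ f$ close to $\mathrm{Id}_X$. *)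

theory Defs
  imports "HOL-Analysis.Analysis"
begin

definition ulf :: "'a set \<Rightarrow> ('a \<Rightarrow> 'a \<Rightarrow> real) \<Rightarrow> bool" where
  "ulf X d \<longleftrightarrow> (\<forall>r>0. \<exists>N::nat. \<forall>x\<in>X.
      finite {y\<in>X. d x y \<le> r} \<and> card {y\<in>X. d x y \<le> r} \<le> N)"

definition coarse_map ::
  "'a set \<Rightarrow> ('a \<Rightarrow> 'a \<Rightarrow> real) \<Rightarrow> 'b set \<Rightarrow> ('b \<Rightarrow> 'b \<Rightarrow> real) \<Rightarrow> ('a \<Rightarrow> 'b) \<Rightarrow> bool" where
  "coarse_map X dX Y dY f \<longleftrightarrow> (\<forall>x\<in>X. f x \<in> Y) \<and>
     (\<forall>r>0. \<exists>s>0. \<forall>x\<in>X. \<forall>x'\<in>X. dX x x' \<le> r \<longrightarrow> dY (f x) (f x') \<le> s)"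

definition close_maps ::
  "'a set \<Rightarrow> ('b \<Rightarrow> 'b \<Rightarrow> real) \<Rightarrow> ('a \<Rightarrow> 'b) \<Rightarrow> ('a \<Rightarrow> 'b) \<Rightarrow> bool" where
  "close_maps X dY f f' \<longleftrightarrow> (\<exists>C. \<forall>x\<in>X. dY (f x) (f' x) \<le> C)"

definition mutually_inverse_coarse_equivs ::
  "'a set \<Rightarrow> ('a \<Rightarrow> 'a \<Rightarrow> real) \<Rightarrow> 'b set \<Rightarrow> ('b \<Rightarrow> 'b \<Rightarrow> real)
     \<Rightarrow> ('a \<Rightarrow> 'b) \<Rightarrow> ('b \<Rightarrow> 'a) \<Rightarrow> bool" where
  "mutually_inverse_coarse_equivs X dX Y dY f g \<longleftrightarrow>
     coarse_map X dX Y dY f \<and> coarse_map Y dY X dX g \<and>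
     close_maps Y dY (f \<circ> g) id \<and> close_maps X dX (g \<circ> f) id"

definition coarse_equivalence ::
  "'a set \<Rightarrow> ('a \<Rightarrow> 'a \<Rightarrow> real) \<Rightarrow> 'b set \<Rightarrow> ('b \<Rightarrow> 'b \<Rightarrow> real) \<Rightarrow> ('a \<Rightarrow> 'b) \<Rightarrow> bool" where
  "coarse_equivalence X dX Y dY f \<longleftrightarrow> (\<exists>g. mutually_inverse_coarse_equivs X dX Y dY f g)"

end

theory Submission
  imports Defs
begin

definition hallc :: "'a set \<Rightarrow> ('a \<Rightarrow> 'b set) \<Rightarrow> bool" where
  "hallc S \<alpha> \<longleftrightarrow> (\<forall>A. A \<subseteq> S \<and> finite A \<longrightarrow> card A \<le> card (\<Union>x\<in>A. \<alpha> x))"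

lemma crit_union:
  assumes h: "hallc S \<alpha>" and fin: "\<forall>x\<in>S. finite (\<alpha> x)"
    and A: "A \<subseteq> S" "finite A" "card (\<Union>x\<in>A. \<alpha> x) = card A"
    and B: "B \<subseteq> S" "finite B" "card (\<Union>x\<in>B. \<alpha> x) = card B"
  shows "card (\<Union>x\<in>A \<union> B. \<alpha> x) = card (A \<union> B)"
proof -
  have fA: "finite (\<Union>x\<in>A. \<alpha> x)" using A fin by auto
  have fB: "finite (\<Union>x\<in>B. \<alpha> x)" using B fin by auto
  have e: "(\<Union>x\<in>A \<union> B. \<alpha> x) = (\<Union>x\<in>A. \<alpha> x) \<union> (\<Union>x\<in>B. \<alpha> x)" by auto
  have c1: "card ((\<Union>x\<in>A. \<alpha> x) \<union> (\<Union>x\<in>B. \<alpha> x)) + card ((\<Union>x\<in>A. \<alpha> x) \<inter> (\<Union>x\<in>B. \<alpha> x))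
      = card (\<Union>x\<in>A. \<alpha> x) + card (\<Union>x\<in>B. \<alpha> x)"
    using card_Un_Int[OF fA fB] by simp
  have "A \<inter> B \<subseteq> S \<and> finite (A \<inter> B)" using A by auto
  then have "card (A \<inter> B) \<le> card (\<Union>x\<in>A \<inter> B. \<alpha> x)" using h unfolding hallc_def by blast
  also have "\<dots> \<le> card ((\<Union>x\<in>A. \<alpha> x) \<inter> (\<Union>x\<in>B. \<alpha> x))"
    by (rule card_mono) (use fA in auto)
  finally have c2: "card (A \<inter> B) \<le> card ((\<Union>x\<in>A. \<alpha> x) \<inter> (\<Union>x\<in>B. \<alpha> x))" .
  have c3: "card (A \<union> B) + card (A \<inter> B) = card A + card B"
    using card_Un_Int[OF A(2) B(2)] by simp
  have "A \<union> B \<subseteq> S \<and> finite (A \<union> B)" using A B by auto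
  then have "card (A \<union> B) \<le> card (\<Union>x\<in>A \<union> B. \<alpha> x)" using h unfolding hallc_def by blast
  moreover have "card (\<Union>x\<in>A \<union> B. \<alpha> x) = card ((\<Union>x\<in>A. \<alpha> x) \<union> (\<Union>x\<in>B. \<alpha> x))" using e by simp
  ultimately show ?thesis using c1 c2 c3 A B by linarith
qed

lemma hall_step:
  assumes h: "hallc S \<alpha>" and fin: "\<forall>x\<in>S. finite (\<alpha> x)" and x: "x \<in> S"
  shows "\<exists>y\<in>\<alpha> x. hallc (S - {x}) (\<lambda>z. \<alpha> z - {y})"
proof (rule ccontr)
  assume "\<not> ?thesis"
  then have "\<forall>y\<in>\<alpha> x. \<exists>A. A \<subseteq> S - {x} \<and> finite A \<and> card A > card (\<Union>z\<in>A. \<alpha> z - {y})"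
    unfolding hallc_def by (auto simp: not_le)
  then obtain Af where Af: "\<And>y. y \<in> \<alpha> x \<Longrightarrow> Af y \<subseteq> S - {x} \<and> finite (Af y) \<and> card (Af y) > card (\<Union>z\<in>Af y. \<alpha> z - {y})"
    by metis
  have crit: "y \<in> (\<Union>z\<in>Af y. \<alpha> z) \<and> card (\<Union>z\<in>Af y. \<alpha> z) = card (Af y)" if y: "y \<in> \<alpha> x" for y
  proof -
    have a: "Af y \<subseteq> S" "finite (Af y)" using Af[OF y] by auto
    have f: "finite (\<Union>z\<in>Af y. \<alpha> z)" using a fin by auto
    have hh: "card (Af y) \<le> card (\<Union>z\<in>Af y. \<alpha> z)" using h a unfolding hallc_def by auto
    have eq: "(\<Union>z\<in>Af y. \<alpha> z - {y}) = (\<Union>z\<in>Af y. \<alpha> z) - {y}" by auto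
    show ?thesis
    proof (cases "y \<in> (\<Union>z\<in>Af y. \<alpha> z)")
      case True
      have "card ((\<Union>z\<in>Af y. \<alpha> z) - {y}) = card (\<Union>z\<in>Af y. \<alpha> z) - 1"
        using card_Diff_singleton[OF True] .
      moreover have "card (\<Union>z\<in>Af y. \<alpha> z) > 0" using True f card_gt_0_iff by blast
      moreover have "card (\<Union>z\<in>Af y. \<alpha> z - {y}) < card (Af y)" using Af[OF y] by blast
      ultimately show ?thesis using eq hh True by auto
    next
      case False
      then have "(\<Union>z\<in>Af y. \<alpha> z) - {y} = (\<Union>z\<in>Af y. \<alpha> z)" by auto
      then show ?thesis using Af[OF y] eq hh by auto
    qed
  qed
  have U: "F \<subseteq> \<alpha> x \<Longrightarrow> card (\<Union>z\<in>(\<Union>y\<in>F. Af y). \<alpha> z) = card (\<Union>y\<in>F. Af y)" for F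
  proof -
    assume "F \<subseteq> \<alpha> x"
    have "finite F" using \<open>F \<subseteq> \<alpha> x\<close> fin x finite_subset by blast
    then show ?thesis using \<open>F \<subseteq> \<alpha> x\<close>
    proof (induction F rule: finite_induct)
      case empty
      then show ?case by simp
    next
      case (insert y F)
      have y: "y \<in> \<alpha> x" using insert by auto
      have "card (\<Union>z\<in>Af y \<union> (\<Union>y\<in>F. Af y). \<alpha> z) = card (Af y \<union> (\<Union>y\<in>F. Af y))"
        apply (rule crit_union[OF h fin])
        using Af[OF y] crit[OF y] insert Af by auto
      then show ?case by simp
    qed
  qed
  define A where "A = (\<Union>y\<in>\<alpha> x. Af y)"
  have cA: "card (\<Union>z\<in>A. \<alpha> z) = card A" using U[of "\<alpha> x"] A_def by simp
  have Asub: "A \<subseteq> S - {x}" using Af A_def by auto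
  have fA: "finite A" using Af A_def fin x by auto
  have sub: "\<alpha> x \<subseteq> (\<Union>z\<in>A. \<alpha> z)" using crit A_def by blast
  have e: "(\<Union>z\<in>insert x A. \<alpha> z) = (\<Union>z\<in>A. \<alpha> z)" using sub by auto
  have "insert x A \<subseteq> S \<and> finite (insert x A)" using Asub fA x by auto
  then have "card (insert x A) \<le> card (\<Union>z\<in>insert x A. \<alpha> z)"
    using h unfolding hallc_def by blast
  moreover have "x \<notin> A" using Asub by auto
  then have "card (insert x A) = Suc (card A)" using fA by simp
  ultimately show False using cA e by (simp add: \<open>card (insert x A) = Suc (card A)\<close>)
qed


lemma hall_countable:
  assumes cS: "countable S" and fin: "\<forall>x\<in>S. finite (\<alpha> x)" and h: "hallc S \<alpha>"
  shows "\<exists>f. inj_on f S \<and> (\<forall>x\<in>S. f x \<in> \<alpha> x)"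
proof (cases "S = {}")
  case True
  then show ?thesis by auto
next
  case False
  define e where "e = from_nat_into S"
  have rng: "range e = S" using False cS e_def by simp
  define P where "P = (\<lambda>n U y. y \<in> \<alpha> (e n) - U \<and> hallc (S - e ` {..<Suc n}) (\<lambda>z. \<alpha> z - insert y U))"
  define c where "c = (\<lambda>n U. SOME y. P n U y)"
  have cI: "P n V (c n V)" if "P n V y" for n V y
    unfolding c_def using that by (rule someI)
  define U where "U = rec_nat {} (\<lambda>n V. if e n \<in> e ` {..<n} then V else insert (c n V) V)"
  have U0: "U 0 = {}" by (simp add: U_def)
  have US: "U (Suc n) = (if e n \<in> e ` {..<n} then U n else insert (c n (U n)) (U n))" for n
    by (simp add: U_def)
  have inv: "hallc (S - e ` {..<n}) (\<lambda>z. \<alpha> z - U n) \<and>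
     (e n \<notin> e ` {..<n} \<longrightarrow> c n (U n) \<in> \<alpha> (e n) - U n \<and> hallc (S - e ` {..<Suc n}) (\<lambda>z. \<alpha> z - insert (c n (U n)) (U n)))" for n
  proof (induction n)
    case 0
    have h0: "hallc (S - e ` {..<0}) (\<lambda>z. \<alpha> z - U 0)" using h U0 by simp
    show ?case
    proof (rule conjI[OF h0], rule impI)
      have en: "e 0 \<in> S - e ` {..<0}" using rng by auto
      have fin': "\<forall>x\<in>S - e ` {..<0}. finite (\<alpha> x - U 0)" using fin by auto
      obtain y where y: "y \<in> \<alpha> (e 0) - U 0" "hallc (S - e ` {..<0} - {e 0}) (\<lambda>z. \<alpha> z - U 0 - {y})"
        using hall_step[OF h0 fin' en] by auto
      have "y \<in> \<alpha> (e 0) - U 0 \<and> hallc (S - e ` {..<Suc 0}) (\<lambda>z. \<alpha> z - insert y (U 0))"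
      proof -
        have "(\<lambda>z. \<alpha> z - insert y (U 0)) = (\<lambda>z. \<alpha> z - U 0 - {y})" by auto
        moreover have "S - e ` {..<Suc 0} = S - e ` {..<0} - {e 0}" by auto
        ultimately show ?thesis using y by simp
      qed
      then show "c 0 (U 0) \<in> \<alpha> (e 0) - U 0 \<and> hallc (S - e ` {..<Suc 0}) (\<lambda>z. \<alpha> z - insert (c 0 (U 0)) (U 0))"
        using cI unfolding P_def by blast
    qed
  next
    case (Suc n)
    have hS: "hallc (S - e ` {..<Suc n}) (\<lambda>z. \<alpha> z - U (Suc n))"
    proof (cases "e n \<in> e ` {..<n}")
      case True
      then have "e ` {..<Suc n} = e ` {..<n}" by (auto simp: lessThan_Suc)
      then show ?thesis using Suc.IH True US[of n] by simp
    next
      case False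
      then show ?thesis using Suc.IH US[of n] by simp
    qed
    show ?case
    proof (rule conjI[OF hS], rule impI)
      assume nn: "e (Suc n) \<notin> e ` {..<Suc n}"
      have en: "e (Suc n) \<in> S - e ` {..<Suc n}" using rng nn by auto
      have fin': "\<forall>x\<in>S - e ` {..<Suc n}. finite (\<alpha> x - U (Suc n))" using fin by auto
      obtain y where y: "y \<in> \<alpha> (e (Suc n)) - U (Suc n)" "hallc (S - e ` {..<Suc n} - {e (Suc n)}) (\<lambda>z. \<alpha> z - U (Suc n) - {y})"
        using hall_step[OF hS fin' en] by auto
      have "y \<in> \<alpha> (e (Suc n)) - U (Suc n) \<and> hallc (S - e ` {..<Suc (Suc n)}) (\<lambda>z. \<alpha> z - insert y (U (Suc n)))"
      proof -
        have "(\<lambda>z. \<alpha> z - insert y (U (Suc n))) = (\<lambda>z. \<alpha> z - U (Suc n) - {y})" by auto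
        moreover have "S - e ` {..<Suc (Suc n)} = S - e ` {..<Suc n} - {e (Suc n)}" by (auto simp: lessThan_Suc)
        ultimately show ?thesis using y by simp
      qed
      then show "c (Suc n) (U (Suc n)) \<in> \<alpha> (e (Suc n)) - U (Suc n) \<and> hallc (S - e ` {..<Suc (Suc n)}) (\<lambda>z. \<alpha> z - insert (c (Suc n) (U (Suc n))) (U (Suc n)))"
        using cI unfolding P_def by blast
    qed
  qed
  have mono1: "U n \<subseteq> U (Suc n)" for n using US[of n] by auto
  have monoU: "m \<le> n \<Longrightarrow> U m \<subseteq> U n" for m n
    using lift_Suc_mono_le[of U, OF mono1] by blast
  define L where "L = (\<lambda>x. LEAST n. e n = x)"
  have L: "e (L x) = x \<and> e (L x) \<notin> e ` {..<L x}" if "x \<in> S" for x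
  proof -
    have "x \<in> range e" using rng that by simp
    then obtain n where "e n = x" by blast
    then have a: "e (L x) = x" unfolding L_def by (rule LeastI)
    have "\<forall>k<L x. e k \<noteq> x" unfolding L_def using not_less_Least by blast
    then show ?thesis using a by auto
  qed
  define f where "f = (\<lambda>x. c (L x) (U (L x)))"
  have fin_in: "f x \<in> \<alpha> x - U (L x)" if "x \<in> S" for x
  proof -
    have "e (L x) \<notin> e ` {..<L x}" using L[OF that] by blast
    then have "c (L x) (U (L x)) \<in> \<alpha> (e (L x)) - U (L x)" using inv[of "L x"] by blast
    then show ?thesis unfolding f_def using L[OF that] by simp
  qed
  have neq: "f x \<noteq> f x'" if "x \<in> S" "x' \<in> S" "L x < L x'" for x x'
  proof -
    have "e (L x) \<notin> e ` {..<L x}" using L[OF that(1)] by blast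
    then have "f x \<in> U (Suc (L x))" using US[of "L x"] unfolding f_def by simp
    also have "\<dots> \<subseteq> U (L x')" using monoU that(3) by simp
    finally show ?thesis using fin_in[OF that(2)] by auto
  qed
  have "inj_on f S"
  proof (rule inj_onI)
    fix x x' assume xs: "x \<in> S" "x' \<in> S" "f x = f x'"
    show "x = x'"
    proof (rule ccontr)
      assume "x \<noteq> x'"
      then have "L x \<noteq> L x'" using L[OF xs(1)] L[OF xs(2)] by metis
      then show False using neq xs by (metis linorder_neq_iff)
    qed
  qed
  then show ?thesis using fin_in by blast
qed


lemma ulf_countable:
  assumes "ulf X d" shows "countable X"
proof (cases "X = {}")
  case True then show ?thesis by simp
next
  case False
  then obtain x0 where x0: "x0 \<in> X" by auto
  have fin: "finite {y\<in>X. d x0 y \<le> real (Suc n)}" for n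
  proof -
    have "real (Suc n) > 0" by simp
    then obtain N where "\<forall>x\<in>X. finite {y\<in>X. d x y \<le> real (Suc n)} \<and> card {y\<in>X. d x y \<le> real (Suc n)} \<le> N"
      using assms unfolding ulf_def by blast
    then show ?thesis using x0 by blast
  qed
  have "X \<subseteq> (\<Union>n. {y\<in>X. d x0 y \<le> real (Suc n)})"
  proof
    fix y assume y: "y \<in> X"
    have "d x0 y \<le> real (Suc (nat \<lceil>d x0 y\<rceil>))"
      using real_nat_ceiling_ge[of "d x0 y"] by simp
    then show "y \<in> (\<Union>n. {y\<in>X. d x0 y \<le> real (Suc n)})" using y by blast
  qed
  moreover have "countable (\<Union>n. {y\<in>X. d x0 y \<le> real (Suc n)})"
    using fin by (intro countable_UN) (auto intro: countable_finite)
  ultimately show ?thesis using countable_subset by blast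
qed

lemma sb_struct:
  assumes f: "inj_on f X" "f ` X \<subseteq> Y" and g: "inj_on g Y" "g ` Y \<subseteq> X"
  shows "\<exists>h. bij_betw h X Y \<and> (\<forall>x\<in>X. h x = f x \<or> (h x \<in> Y \<and> g (h x) = x))"
proof -
  define C where "C = (\<Union>n. ((g \<circ> f) ^^ n) ` (X - g ` Y))"
  have "((g \<circ> f) ^^ 0) ` (X - g ` Y) = X - g ` Y" by simp
  then have C0: "X - g ` Y \<subseteq> C" unfolding C_def by blast
  have CX: "C \<subseteq> X"
  proof -
    have "((g \<circ> f) ^^ n) ` (X - g ` Y) \<subseteq> X" for n
    proof (induction n)
      case 0 then show ?case by auto
    next
      case (Suc n)
      then show ?case using f g by auto
    qed
    then show ?thesis unfolding C_def by blast
  qed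
  have Cstep: "x \<in> C \<Longrightarrow> g (f x) \<in> C" for x
  proof -
    assume "x \<in> C"
    then obtain n z where "z \<in> X - g ` Y" "x = ((g \<circ> f) ^^ n) z" unfolding C_def by blast
    then have "g (f x) = ((g \<circ> f) ^^ Suc n) z" by simp
    then show ?thesis using \<open>z \<in> X - g ` Y\<close> unfolding C_def by blast
  qed
  have Cback: "g y \<in> C \<Longrightarrow> y \<in> Y \<Longrightarrow> \<exists>z\<in>C. f z = y" for y
  proof -
    assume "g y \<in> C" "y \<in> Y"
    then obtain n z where z: "z \<in> X - g ` Y" "g y = ((g \<circ> f) ^^ n) z" unfolding C_def by blast
    show ?thesis
    proof (cases n)
      case 0
      then show ?thesis using z \<open>y \<in> Y\<close> by auto
    next
      case (Suc m)
      define w where "w = ((g \<circ> f) ^^ m) z"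
      have wC: "w \<in> C" unfolding C_def w_def using z by blast
      have "g y = g (f w)" using z Suc w_def by simp
      have fwY: "f w \<in> Y" using wC CX f by auto
      have "f w = y" using inj_onD[OF g(1) \<open>g y = g (f w)\<close>[symmetric] fwY \<open>y \<in> Y\<close>] .
      then show ?thesis using wC by blast
    qed
  qed
  define h where "h = (\<lambda>x. if x \<in> C then f x else inv_into Y g x)"
  have hY: "h x \<in> Y \<and> (x \<notin> C \<longrightarrow> g (h x) = x)" if "x \<in> X" for x
  proof (cases "x \<in> C")
    case True then show ?thesis using f that h_def by auto
  next
    case False
    then have "x \<in> g ` Y" using C0 that by blast
    then show ?thesis using False h_def by (simp add: inv_into_into f_inv_into_f)
  qed
  have inj: "inj_on h X"
  proof (rule inj_onI)
    fix x x' assume xs: "x \<in> X" "x' \<in> X" "h x = h x'"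
    show "x = x'"
    proof (cases "x \<in> C"; cases "x' \<in> C")
      assume "x \<in> C" "x' \<in> C" then show ?thesis using xs f h_def by (auto dest: inj_onD)
    next
      assume a: "x \<in> C" "x' \<notin> C"
      then have "g (h x) = x'" using hY[OF xs(2)] xs by simp
      then have "g (f x) = x'" using a h_def by simp
      then show ?thesis using Cstep a by auto
    next
      assume a: "x \<notin> C" "x' \<in> C"
      then have "g (h x') = x" using hY[OF xs(1)] xs by simp
      then have "g (f x') = x" using a h_def by simp
      then show ?thesis using Cstep a by auto
    next
      assume a: "x \<notin> C" "x' \<notin> C"
      then show ?thesis using hY xs by metis
    qed
  qed
  have surj: "Y \<subseteq> h ` X"
  proof
    fix y assume y: "y \<in> Y"
    show "y \<in> h ` X"
    proof (cases "g y \<in> C")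
      case True
      then obtain z where "z \<in> C" "f z = y" using Cback y by blast
      then show ?thesis using CX h_def by force
    next
      case False
      have gy: "g y \<in> X" using g y by auto
      have "h (g y) = y" using False h_def y g by (simp add: inv_into_f_f)
      then show ?thesis using gy by force
    qed
  qed
  have "bij_betw h X Y"
    unfolding bij_betw_def using inj surj hY by auto
  moreover have "\<forall>x\<in>X. h x = f x \<or> (h x \<in> Y \<and> g (h x) = x)"
    using hY h_def by auto
  ultimately show ?thesis by blast
qed


theorem lemma3p4:
  fixes X :: "'a set" and dX :: "'a \<Rightarrow> 'a \<Rightarrow> real"
    and Y :: "'b set" and dY :: "'b \<Rightarrow> 'b \<Rightarrow> real"
    and \<alpha> :: "'a \<Rightarrow> 'b set" and \<beta> :: "'b \<Rightarrow> 'a set"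
  assumes mX: "Metric_space X dX" and mY: "Metric_space Y dY"
    and ulfX: "ulf X dX" and ulfY: "ulf Y dY"
    and alpha_fin: "\<forall>x\<in>X. \<alpha> x \<subseteq> Y \<and> finite (\<alpha> x)"
    and beta_fin: "\<forall>y\<in>Y. \<beta> y \<subseteq> X \<and> finite (\<beta> y)"
    and Bij1: "\<forall>f g. (\<forall>x\<in>X. f x \<in> \<alpha> x) \<and> (\<forall>y\<in>Y. g y \<in> \<beta> y) \<longrightarrow>
                 mutually_inverse_coarse_equivs X dX Y dY f g"
    and Bij2a: "\<forall>A. A \<subseteq> X \<and> finite A \<longrightarrow> card A \<le> card (\<Union>x\<in>A. \<alpha> x)"
    and Bij2b: "\<forall>B. B \<subseteq> Y \<and> finite B \<longrightarrow> card B \<le> card (\<Union>y\<in>B. \<beta> y)"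
  shows "\<forall>f. (\<forall>x\<in>X. f x \<in> \<alpha> x) \<longrightarrow>
           (\<exists>h. bij_betw h X Y \<and> coarse_equivalence X dX Y dY h \<and> close_maps X dY f h)"
proof (intro allI impI)
  fix f assume fa: "\<forall>x\<in>X. f x \<in> \<alpha> x"
  have triY: "dY a c \<le> dY a b + dY b c" if "a \<in> Y" "b \<in> Y" "c \<in> Y" for a b c
    using Metric_space.triangle[OF mY that] .
  have triX: "dX a c \<le> dX a b + dX b c" if "a \<in> X" "b \<in> X" "c \<in> X" for a b c
    using Metric_space.triangle[OF mX that] .
  have comY: "dY a b = dY b a" for a b using Metric_space.commute[OF mY] .
  have nnY: "0 \<le> dY a b" for a b using Metric_space.nonneg[OF mY] .
  obtain f' where f': "inj_on f' X" "\<forall>x\<in>X. f' x \<in> \<alpha> x"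
    using hall_countable[of X \<alpha>] ulf_countable[OF ulfX] alpha_fin Bij2a unfolding hallc_def by blast
  obtain g' where g': "inj_on g' Y" "\<forall>y\<in>Y. g' y \<in> \<beta> y"
    using hall_countable[of Y \<beta>] ulf_countable[OF ulfY] beta_fin Bij2b unfolding hallc_def by blast
  have f'Y: "f' ` X \<subseteq> Y" using f' alpha_fin by auto
  have g'X: "g' ` Y \<subseteq> X" using g' beta_fin by auto
  have fY: "\<And>x. x \<in> X \<Longrightarrow> f x \<in> Y" using fa alpha_fin by auto
  obtain h where hb: "bij_betw h X Y" and hs: "\<forall>x\<in>X. h x = f' x \<or> (h x \<in> Y \<and> g' (h x) = x)"
    using sb_struct[OF f'(1) f'Y g'(1) g'X] by blast
  have hY: "\<And>x. x \<in> X \<Longrightarrow> h x \<in> Y" using hb bij_betwE by blast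
  have M1: "mutually_inverse_coarse_equivs X dX Y dY f g'" using Bij1 fa g' by blast
  have M2: "mutually_inverse_coarse_equivs X dX Y dY f' g'" using Bij1 f' g' by blast
  have fc: "coarse_map X dX Y dY f" and g'c: "coarse_map Y dY X dX g'"
    using M1 unfolding mutually_inverse_coarse_equivs_def by auto
  have f'c: "coarse_map X dX Y dY f'"
    using M2 unfolding mutually_inverse_coarse_equivs_def by auto
  obtain C1 where C1: "\<forall>y\<in>Y. dY (f (g' y)) y \<le> C1"
    using M1 unfolding mutually_inverse_coarse_equivs_def close_maps_def by auto
  obtain C2 where C2: "\<forall>x\<in>X. dX (g' (f x)) x \<le> C2"
    using M1 unfolding mutually_inverse_coarse_equivs_def close_maps_def by auto
  obtain C3 where C3: "\<forall>y\<in>Y. dY (f' (g' y)) y \<le> C3"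
    using M2 unfolding mutually_inverse_coarse_equivs_def close_maps_def by auto
  have "max C2 1 > 0" by simp
  then obtain s where s: "\<forall>x\<in>X. \<forall>x'\<in>X. dX x x' \<le> max C2 1 \<longrightarrow> dY (f' x) (f' x') \<le> s"
    using f'c unfolding coarse_map_def by blast
  define K where "K = max (C3 + s) C1"
  have K: "dY (f x) (h x) \<le> K" if x: "x \<in> X" for x
  proof (cases "h x = f' x")
    case True
    have gx: "g' (f x) \<in> X" using g'X fY[OF x] by auto
    have fgY: "f' (g' (f x)) \<in> Y" using f'Y gx by auto
    have a: "dY (f x) (f' (g' (f x))) \<le> C3" using C3 fY[OF x] comY by metis
    have "dX (g' (f x)) x \<le> max C2 1" using C2 x by fastforce
    then have b: "dY (f' (g' (f x))) (f' x) \<le> s" using s gx x by blast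
    have "dY (f x) (f' x) \<le> dY (f x) (f' (g' (f x))) + dY (f' (g' (f x))) (f' x)"
      using triY[OF fY[OF x] fgY] f'Y x by auto
    then show ?thesis using a b True K_def by (simp add: max_def)
  next
    case False
    then have "h x \<in> Y" "g' (h x) = x" using hs x by auto
    then have "dY (f x) (h x) \<le> C1" using C1 by metis
    then show ?thesis unfolding K_def by linarith
  qed
  have close: "close_maps X dY f h" unfolding close_maps_def using K by blast
  have hc: "coarse_map X dX Y dY h"
    unfolding coarse_map_def
  proof (intro conjI allI impI ballI)
    show "\<And>x. x \<in> X \<Longrightarrow> h x \<in> Y" by (rule hY)
    fix r :: real assume "r > 0"
    then obtain sf where sf: "\<forall>x\<in>X. \<forall>x'\<in>X. dX x x' \<le> r \<longrightarrow> dY (f x) (f x') \<le> sf"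
      using fc unfolding coarse_map_def by blast
    show "\<exists>s>0. \<forall>x\<in>X. \<forall>x'\<in>X. dX x x' \<le> r \<longrightarrow> dY (h x) (h x') \<le> s"
    proof (intro exI[of _ "max (2 * K + sf) 1"] conjI ballI impI)
      show "0 < max (2 * K + sf) 1" by simp
      fix x x' assume xx: "x \<in> X" "x' \<in> X" "dX x x' \<le> r"
      have "dY (h x) (h x') \<le> dY (h x) (f x) + dY (f x) (h x')"
        using triY[OF hY[OF xx(1)] fY[OF xx(1)] hY[OF xx(2)]] .
      moreover have "dY (f x) (h x') \<le> dY (f x) (f x') + dY (f x') (h x')"
        using triY[OF fY[OF xx(1)] fY[OF xx(2)] hY[OF xx(2)]] .
      moreover have "dY (h x) (f x) \<le> K" using K[OF xx(1)] comY by metis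
      moreover have "dY (f x') (h x') \<le> K" using K[OF xx(2)] .
      moreover have "dY (f x) (f x') \<le> sf" using sf xx by blast
      ultimately show "dY (h x) (h x') \<le> max (2 * K + sf) 1" by linarith
    qed
  qed
  have c1: "close_maps Y dY (h \<circ> g') id"
    unfolding close_maps_def
  proof (intro exI[of _ "K + C1"] ballI)
    fix y assume y: "y \<in> Y"
    have gy: "g' y \<in> X" using g'X y by auto
    have "dY (h (g' y)) y \<le> dY (h (g' y)) (f (g' y)) + dY (f (g' y)) y"
      using triY[OF hY[OF gy] fY[OF gy] y] .
    moreover have "dY (h (g' y)) (f (g' y)) \<le> K" using K[OF gy] comY by metis
    moreover have "dY (f (g' y)) y \<le> C1" using C1 y by blast
    ultimately show "dY ((h \<circ> g') y) (id y) \<le> K + C1" by simp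
  qed
  have "max K 1 > 0" by simp
  then obtain t where t: "\<forall>y\<in>Y. \<forall>y'\<in>Y. dY y y' \<le> max K 1 \<longrightarrow> dX (g' y) (g' y') \<le> t"
    using g'c unfolding coarse_map_def by blast
  have c2: "close_maps X dX (g' \<circ> h) id"
    unfolding close_maps_def
  proof (intro exI[of _ "t + C2"] ballI)
    fix x assume x: "x \<in> X"
    have a: "g' (h x) \<in> X" "g' (f x) \<in> X" using g'X hY[OF x] fY[OF x] by auto
    have "dX (g' (h x)) x \<le> dX (g' (h x)) (g' (f x)) + dX (g' (f x)) x"
      using triX[OF a x] .
    moreover have "dY (h x) (f x) \<le> max K 1" using K[OF x] comY by (metis max.coboundedI1)
    then have "dX (g' (h x)) (g' (f x)) \<le> t" using t hY[OF x] fY[OF x] by blast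
    moreover have "dX (g' (f x)) x \<le> C2" using C2 x by blast
    ultimately show "dX ((g' \<circ> h) x) (id x) \<le> t + C2" by simp
  qed
  have "coarse_equivalence X dX Y dY h"
    unfolding coarse_equivalence_def mutually_inverse_coarse_equivs_def
    using hc g'c c1 c2 by blast
  then show "\<exists>h. bij_betw h X Y \<and> coarse_equivalence X dX Y dY h \<and> close_maps X dY f h"
    using hb close by blast
qed

end
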